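(* Let $n\geqslant 2$ and $\alpha\in\mathbf{I}\mathbb{N}_{\infty}^n$. Then there exist unique elements $\sigma_l,\sigma_r$ of the group of units $H(\mathbb{I})$ of $\mathbf{I}\mathbb{N}_{\infty}^n$ such that $\sigma_l\alpha$ and $\alpha\sigma_r$ are idempotents of $\mathbf{I}\mathbb{N}_{\infty}^n$.
   Context: $\mathbb{N}=\{1,2,3,\ldots\}$, $n\geqslant 2$, and $\mathbb{N}^n$ carries the Euclidean metric $d$. A partial isometry of $\mathbb{N}^n$ is an injective partial map $\alpha\colon\mathbb{N}^n\rightharpoonup\mathbb{N}^n$ with $d((\mathbf{x})\alpha,(\mathbf{y})\alpha)=d(\mathbf{x},\mathbf{y})$ for all $\mathbf{x},\mathbf{y}\in\operatorname{dom}\alpha$; it is cofinite if $\mathbb{N}^n\setminus\operatorname{dom}\alpha$ and $\mathbb{N}^n\setminus\operatorname{ran}\alpha$ are finite. $\mathbf{I}\mathbb{N}_{\infty}^n$ is the monoid of all partial cofinite isometries of $\mathbb{N}^n$ under composition of partial maps written on the right: $\mathbf{x}(\alpha\beta)=(\mathbf{x}\alpha)\beta$ with $\operatorname{dom}(\alpha\beta)=\{\mathbf{x}\in\operatorname{dom}\alpha\colon \mathbf{x}\alpha\in\operatorname{dom}\beta\}$. Its identity is the identity map $\mathbb{I}$ of $\mathbb{N}^n$ and $H(\mathbb{I})$ is its group of units. *)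

theory Defs
  imports Complex_Main
begin

definition Pts :: "nat \<Rightarrow> nat list set" where
  "Pts n = {x. length x = n \<and> (\<forall>i<n. 1 \<le> x ! i)}"

definition edist :: "nat \<Rightarrow> nat list \<Rightarrow> nat list \<Rightarrow> real" where
  "edist n x y = sqrt (\<Sum>i<n. (real (x ! i) - real (y ! i))\<^sup>2)"

definition IN_inf :: "nat \<Rightarrow> (nat list \<rightharpoonup> nat list) set" where
  "IN_inf n = {\<alpha>. dom \<alpha> \<subseteq> Pts n \<and> ran \<alpha> \<subseteq> Pts n \<and> inj_on \<alpha> (dom \<alpha>)
     \<and> (\<forall>x\<in>dom \<alpha>. \<forall>y\<in>dom \<alpha>. edist n (the (\<alpha> x)) (the (\<alpha> y)) = edist n x y)
     \<and> finite (Pts n - dom \<alpha>) \<and> finite (Pts n - ran \<alpha>)}"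

text \<open>Composition written on the right: x(\<alpha>\<beta>) = (x\<alpha>)\<beta>.\<close>
definition pmult :: "(nat list \<rightharpoonup> nat list) \<Rightarrow> (nat list \<rightharpoonup> nat list) \<Rightarrow> (nat list \<rightharpoonup> nat list)" where
  "pmult \<alpha> \<beta> = \<beta> \<circ>\<^sub>m \<alpha>"

definition pid :: "nat \<Rightarrow> (nat list \<rightharpoonup> nat list)" where
  "pid n = (\<lambda>x. if x \<in> Pts n then Some x else None)"

definition units_IN :: "nat \<Rightarrow> (nat list \<rightharpoonup> nat list) set" where
  "units_IN n = {\<sigma> \<in> IN_inf n. \<exists>\<tau>\<in>IN_inf n. pmult \<sigma> \<tau> = pid n \<and> pmult \<tau> \<sigma> = pid n}"

definition idem_IN :: "(nat list \<rightharpoonup> nat list) \<Rightarrow> bool" where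
  "idem_IN \<epsilon> \<longleftrightarrow> pmult \<epsilon> \<epsilon> = \<epsilon>"

end

theory Submission
  imports Defs
begin

definition dd :: "nat \<Rightarrow> nat list \<Rightarrow> nat list \<Rightarrow> int" where
  "dd n x y = (\<Sum>k<n. (int (x!k) - int (y!k))^2)"

definition ip :: "nat \<Rightarrow> nat list \<Rightarrow> nat list \<Rightarrow> nat list \<Rightarrow> int" where
  "ip n x y w = (\<Sum>k<n. (int (x!k) - int (w!k)) * (int (y!k) - int (w!k)))"

lemma edist_dd: "edist n x y = sqrt (real_of_int (dd n x y))"
  unfolding edist_def dd_def by simp

lemma polar: "2 * ip n x y w = dd n x w + dd n y w - dd n x y"
proof -
  have "dd n x w + dd n y w - dd n x y = (\<Sum>k<n. (int (x!k) - int (w!k))^2 + (int (y!k) - int (w!k))^2 - (int (x!k) - int (y!k))^2)"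
    unfolding dd_def by (simp add: sum.distrib sum_subtractf)
  also have "\<dots> = (\<Sum>k<n. 2 * ((int (x!k) - int (w!k)) * (int (y!k) - int (w!k))))"
    by (rule sum.cong) (auto simp: power2_eq_square algebra_simps)
  also have "\<dots> = 2 * ip n x y w" unfolding ip_def by (simp add: sum_distrib_left)
  finally show ?thesis by simp
qed

lemma iso_dd:
  assumes "\<alpha> \<in> IN_inf n" "x \<in> dom \<alpha>" "y \<in> dom \<alpha>"
  shows "dd n (the (\<alpha> x)) (the (\<alpha> y)) = dd n x y"
proof -
  have "edist n (the (\<alpha> x)) (the (\<alpha> y)) = edist n x y" using assms unfolding IN_inf_def by blast
  hence "sqrt (real_of_int (dd n (the (\<alpha> x)) (the (\<alpha> y)))) = sqrt (real_of_int (dd n x y))" by (simp add: edist_dd)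
  thus ?thesis by simp
qed

lemma iso_ip:
  assumes "\<alpha> \<in> IN_inf n" "x \<in> dom \<alpha>" "y \<in> dom \<alpha>" "w \<in> dom \<alpha>"
  shows "ip n (the (\<alpha> x)) (the (\<alpha> y)) (the (\<alpha> w)) = ip n x y w"
  using polar[of n "the (\<alpha> x)" "the (\<alpha> y)" "the (\<alpha> w)"] polar[of n x y w]
    iso_dd[OF assms(1,2,4)] iso_dd[OF assms(1,3,4)] iso_dd[OF assms(1,2,3)] by linarith

lemma unitvec:
  fixes g :: "nat \<Rightarrow> int"
  assumes "(\<Sum>k<n. (g k)^2) = 1"
  shows "\<exists>k<n. (g k = 1 \<or> g k = -1) \<and> (\<forall>j<n. j \<noteq> k \<longrightarrow> g j = 0)"
proof -
  have "\<exists>k<n. g k \<noteq> 0"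
  proof (rule ccontr)
    assume "\<not> ?thesis"
    hence "(\<Sum>k<n. (g k)^2) = 0" by simp
    thus False using assms by simp
  qed
  then obtain k where k: "k<n" "g k \<noteq> 0" by blast
  have split: "(\<Sum>k<n. (g k)^2) = (g k)^2 + (\<Sum>j\<in>{..<n}-{k}. (g j)^2)"
    using k by (simp add: sum.remove)
  have nn: "(\<Sum>j\<in>{..<n}-{k}. (g j)^2) \<ge> 0" by (simp add: sum_nonneg)
  have ge: "(g k)^2 \<ge> 1" using k(2)
    by (smt (verit) power2_less_eq_zero_iff zero_less_power2 power2_eq_square mult_le_cancel_left1 mult_less_cancel_left1)
  have gk: "(g k)^2 = 1" using split nn ge assms by linarith
  hence "g k = 1 \<or> g k = -1" by (simp add: power2_eq_1_iff)
  moreover have rest: "(\<Sum>j\<in>{..<n}-{k}. (g j)^2) = 0" using split gk assms by linarith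
  have "\<forall>j<n. j \<noteq> k \<longrightarrow> g j = 0"
  proof (intro allI impI)
    fix j assume "j<n" "j\<noteq>k"
    hence "(g j)^2 = 0" using rest sum_nonneg_eq_0_iff[of "{..<n}-{k}" "\<lambda>j. (g j)^2"] by simp
    thus "g j = 0" by simp
  qed
  ultimately show ?thesis using k by blast
qed

lemma bound_fin:
  assumes "finite (C :: nat list set)"
  shows "\<exists>M. \<forall>x\<in>C. \<forall>i<length x. x!i \<le> M"
proof
  show "\<forall>x\<in>C. \<forall>i<length x. x!i \<le> Max (sum_list ` C)"
  proof (intro ballI allI impI)
    fix x i assume "x \<in> C" "i < length x"
    have "x!i \<le> sum_list x" using \<open>i<length x\<close> by (simp add: elem_le_sum_list)
    also have "\<dots> \<le> Max (sum_list ` C)" using assms \<open>x\<in>C\<close> by simp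
    finally show "x!i \<le> Max (sum_list ` C)" .
  qed
qed

lemma big_set:
  assumes "finite (Pts n - S)"
  shows "\<exists>M. \<forall>x\<in>Pts n. (\<exists>i<n. M < x!i) \<longrightarrow> x \<in> S"
proof -
  obtain M where M: "\<forall>x\<in>Pts n - S. \<forall>i<length x. x!i \<le> M" using bound_fin[OF assms] by blast
  show ?thesis
  proof (intro exI ballI impI)
    fix x assume x: "x \<in> Pts n" "\<exists>i<n. M < x!i"
    show "x \<in> S"
    proof (rule ccontr)
      assume "x \<notin> S"
      then have "\<forall>i<length x. x!i \<le> M" using M x(1) by blast
      moreover have "length x = n" using x(1) by (simp add: Pts_def)
      ultimately show False using x(2) by force
    qed
  qed
qed


lemma perm_structure:
  assumes n2: "n \<ge> 2" and a: "\<alpha> \<in> IN_inf n"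
  shows "\<exists>\<pi>. bij_betw \<pi> {..<n} {..<n} \<and> (\<forall>x\<in>dom \<alpha>. length (the (\<alpha> x)) = n \<and> (\<forall>i<n. the (\<alpha> x) ! (\<pi> i) = x ! i))"
proof -
  have domP: "dom \<alpha> \<subseteq> Pts n" and ranP: "ran \<alpha> \<subseteq> Pts n" and inj: "inj_on \<alpha> (dom \<alpha>)"
    and fd: "finite (Pts n - dom \<alpha>)" and fr: "finite (Pts n - ran \<alpha>)" using a unfolding IN_inf_def by auto
  obtain M where M: "\<forall>x\<in>Pts n. (\<exists>i<n. M < x!i) \<longrightarrow> x \<in> dom \<alpha>" using big_set[OF fd] by blast
  obtain M' where M': "\<forall>x\<in>Pts n. (\<exists>i<n. M' < x!i) \<longrightarrow> x \<in> ran \<alpha>" using big_set[OF fr] by blast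
  define A where "A x = the (\<alpha> x)" for x
  have AinP: "A x \<in> Pts n" if "x \<in> dom \<alpha>" for x
  proof -
    from that obtain y where "\<alpha> x = Some y" by auto
    hence "y \<in> ran \<alpha>" by (auto simp: ran_def)
    thus ?thesis using ranP \<open>\<alpha> x = Some y\<close> by (auto simp: A_def)
  qed
  have Anat: "x \<in> dom \<alpha> \<Longrightarrow> i < n \<Longrightarrow> 1 \<le> A x ! i" for x i using AinP[of x] by (simp add: Pts_def)
  define z where "z = replicate n (M+1)"
  define e where "e i t = z[i := M+1+t]" for i t
  have z_nth: "\<And>k. k < n \<Longrightarrow> z!k = M+1" by (simp add: z_def)
  have e_nth: "\<And>i t k. i<n \<Longrightarrow> k<n \<Longrightarrow> e i t ! k = (if k = i then M+1+t else M+1)"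
    by (simp add: e_def z_def nth_list_update)
  have e_len: "\<And>i t. length (e i t) = n" by (simp add: e_def z_def)
  have n0: "0 < n" using n2 by simp
  have e_D: "\<And>i t. i<n \<Longrightarrow> e i t \<in> dom \<alpha>"
  proof -
    fix i t assume i: "i<n"
    have "e i t \<in> Pts n" using e_nth[OF i] e_len by (auto simp: Pts_def)
    moreover have "M < e i t ! i" using e_nth[OF i i] by simp
    ultimately show "e i t \<in> dom \<alpha>" using M i by blast
  qed
  have z_D: "z \<in> dom \<alpha>"
  proof -
    have "z \<in> Pts n" by (simp add: z_def Pts_def)
    moreover have "M < z ! 0" using z_nth[OF n0] by simp
    ultimately show ?thesis using M n0 by blast
  qed
  have ip_e: "\<And>i x. i<n \<Longrightarrow> ip n x (e i 1) z = int (x!i) - int (M+1)"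
  proof -
    fix i x assume i: "i<n"
    have "ip n x (e i 1) z = (\<Sum>k<n. if k = i then int (x!i) - int (M+1) else 0)"
      unfolding ip_def by (rule sum.cong) (auto simp: e_nth[OF i] z_nth)
    also have "\<dots> = int (x!i) - int (M+1)" using i by simp
    finally show "ip n x (e i 1) z = int (x!i) - int (M+1)" .
  qed
  have dd_e: "\<And>i. i<n \<Longrightarrow> dd n (e i 1) z = 1"
  proof -
    fix i assume i: "i<n"
    have "dd n (e i 1) z = (\<Sum>k<n. if k = i then 1 else 0)"
      unfolding dd_def by (rule sum.cong) (auto simp: e_nth[OF i] z_nth)
    also have "\<dots> = 1" using i by simp
    finally show "dd n (e i 1) z = 1" .
  qed
  define f where "f i k = int (A (e i 1) ! k) - int (A z ! k)" for i k
  have sumf: "(\<Sum>k<n. (f i k)^2) = 1" if i: "i<n" for i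
  proof -
    have "(\<Sum>k<n. (f i k)^2) = dd n (A (e i 1)) (A z)" by (simp add: f_def dd_def)
    also have "\<dots> = 1" using iso_dd[OF a e_D[OF i] z_D] dd_e[OF i] by (simp add: A_def)
    finally show ?thesis .
  qed
  have "\<forall>i\<in>{..<n}. \<exists>k. k<n \<and> (f i k = 1 \<or> f i k = -1) \<and> (\<forall>j<n. j\<noteq>k \<longrightarrow> f i j = 0)"
    using unitvec sumf by blast
  then obtain \<pi> where \<pi>: "\<forall>i\<in>{..<n}. \<pi> i < n \<and> (f i (\<pi> i) = 1 \<or> f i (\<pi> i) = -1) \<and> (\<forall>j<n. j \<noteq> \<pi> i \<longrightarrow> f i j = 0)"
    by (metis bchoice)
  have KEY: "(int (A x!(\<pi> i)) - int (A z!(\<pi> i))) * f i (\<pi> i) = int (x!i) - int (M+1)"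
    if x: "x \<in> dom \<alpha>" and i: "i<n" for x i
  proof -
    have "ip n (A x) (A (e i 1)) (A z) = ip n x (e i 1) z"
      using iso_ip[OF a x e_D[OF i] z_D] by (simp add: A_def)
    also have "\<dots> = int (x!i) - int (M+1)" using ip_e[OF i] .
    finally have 1: "ip n (A x) (A (e i 1)) (A z) = int (x!i) - int (M+1)" .
    have "ip n (A x) (A (e i 1)) (A z) = (\<Sum>k<n. (int (A x!k) - int (A z!k)) * f i k)"
      by (simp add: ip_def f_def)
    also have "\<dots> = (\<Sum>k<n. if k = \<pi> i then (int (A x!(\<pi> i)) - int (A z!(\<pi> i))) * f i (\<pi> i) else 0)"
      by (rule sum.cong) (use \<pi> i in auto)
    also have "\<dots> = (int (A x!(\<pi> i)) - int (A z!(\<pi> i))) * f i (\<pi> i)" using \<pi> i by simp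
    finally show ?thesis using 1 by simp
  qed
  have pin: "\<And>i. i<n \<Longrightarrow> \<pi> i < n" using \<pi> by blast
  have injp: "inj_on \<pi> {..<n}"
  proof (rule inj_onI)
    fix i j assume i: "i \<in> {..<n}" and j: "j \<in> {..<n}" and eq: "\<pi> i = \<pi> j"
    show "i = j"
    proof (rule ccontr)
      assume ne: "i \<noteq> j"
      have "(int (A (e j 1)!(\<pi> i)) - int (A z!(\<pi> i))) * f i (\<pi> i) = int (e j 1 ! i) - int (M+1)"
        using KEY[OF e_D i[simplified]] j i by simp
      also have "\<dots> = 0" using e_nth[of j i 1] i j ne by simp
      finally have "f j (\<pi> i) * f i (\<pi> i) = 0" by (simp add: f_def)
      moreover have "f i (\<pi> i) \<noteq> 0" using \<pi> i by force
      ultimately have "f j (\<pi> i) = 0" by simp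
      moreover have "f j (\<pi> j) \<noteq> 0" using \<pi> j by force
      ultimately show False using eq by simp
    qed
  qed
  have bij: "bij_betw \<pi> {..<n} {..<n}"
    using endo_inj_surj[of "{..<n}" \<pi>] injp pin by (auto simp: bij_betw_def)
  have sgn: "f i (\<pi> i) = 1" if i: "i<n" for i
  proof (rule ccontr)
    assume "f i (\<pi> i) \<noteq> 1"
    hence m1: "f i (\<pi> i) = -1" using \<pi> i by force
    define t where "t = A z ! (\<pi> i) + 1"
    have "(int (A (e i t)!(\<pi> i)) - int (A z!(\<pi> i))) * f i (\<pi> i) = int (e i t ! i) - int (M+1)"
      using KEY[OF e_D[OF i] i] .
    hence "int (A (e i t)!(\<pi> i)) = int (A z!(\<pi> i)) - int t" using m1 e_nth[OF i i] by simp
    thus False unfolding t_def by simp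
  qed
  have KEY2: "int (A x!(\<pi> i)) = int (A z!(\<pi> i)) + int (x!i) - int (M+1)"
    if x: "x \<in> dom \<alpha>" and i: "i<n" for x i
    using KEY[OF x i] sgn[OF i] by simp
  have c0: "int (A z!(\<pi> i)) = int (M+1)" if i: "i<n" for i
  proof -
    define j where "j = (if i = 0 then 1 else 0::nat)"
    have j: "j < n" "j \<noteq> i" using n2 by (auto simp: j_def)
    define x where "x = (replicate n (M+1))[i := 1]"
    have xP: "x \<in> Pts n" using i by (auto simp: x_def Pts_def nth_list_update)
    have "M < x ! j" using j by (simp add: x_def)
    hence xD: "x \<in> dom \<alpha>" using M xP j by blast
    have "x ! i = 1" using i by (simp add: x_def)
    hence ge: "int (A z!(\<pi> i)) \<ge> int (M+1)" using KEY2[OF xD i] Anat[OF xD pin[OF i]] by linarith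
    define j' where "j' = (if \<pi> i = 0 then 1 else 0::nat)"
    have j': "j' < n" "j' \<noteq> \<pi> i" using n2 by (auto simp: j'_def)
    define y where "y = (replicate n (M'+1))[\<pi> i := 1]"
    have yP: "y \<in> Pts n" using pin[OF i] by (auto simp: y_def Pts_def nth_list_update)
    have "M' < y ! j'" using j' by (simp add: y_def)
    hence "y \<in> ran \<alpha>" using M' yP j' by blast
    then obtain w where w: "\<alpha> w = Some y" by (auto simp: ran_def)
    hence wD: "w \<in> dom \<alpha>" by auto
    have Aw: "A w = y" using w by (simp add: A_def)
    have "1 \<le> w ! i" using domP wD i by (auto simp: Pts_def)
    moreover have "y ! (\<pi> i) = 1" using pin[OF i] by (simp add: y_def)
    ultimately have le: "int (A z!(\<pi> i)) \<le> int (M+1)" using KEY2[OF wD i] Aw by simp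
    from ge le show ?thesis by linarith
  qed
  show ?thesis
  proof (intro exI conjI ballI allI impI)
    show "bij_betw \<pi> {..<n} {..<n}" by (rule bij)
  next
    fix x assume x: "x \<in> dom \<alpha>"
    show "length (the (\<alpha> x)) = n" using AinP[OF x] by (simp add: A_def Pts_def)
    fix i assume i: "i < n"
    show "the (\<alpha> x) ! (\<pi> i) = x ! i" using KEY2[OF x i] c0[OF i] by (simp add: A_def)
  qed
qed


definition pm :: "nat \<Rightarrow> (nat \<Rightarrow> nat) \<Rightarrow> nat list \<Rightarrow> nat list option" where
  "pm n p = (\<lambda>x. if x \<in> Pts n then Some (map (\<lambda>i. x!(p i)) [0..<n]) else None)"

lemma pm_Pts:
  assumes "\<forall>k<n. p k < n" "x \<in> Pts n"
  shows "map (\<lambda>i. x!(p i)) [0..<n] \<in> Pts n"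
  using assms by (auto simp: Pts_def)

lemma pm_in:
  assumes p: "\<forall>k<n. p k < n" and q: "\<forall>k<n. q k < n"
    and pq: "\<forall>k<n. p (q k) = k" and qp: "\<forall>k<n. q (p k) = k"
  shows "pm n p \<in> IN_inf n"
proof -
  have dom: "dom (pm n p) = Pts n" by (auto simp: pm_def dom_def)
  have ran: "ran (pm n p) = Pts n"
  proof
    show "ran (pm n p) \<subseteq> Pts n" using pm_Pts[OF p] by (auto simp: ran_def pm_def split: if_splits)
    show "Pts n \<subseteq> ran (pm n p)"
    proof
      fix y assume y: "y \<in> Pts n"
      define x where "x = map (\<lambda>k. y!(q k)) [0..<n]"
      have xP: "x \<in> Pts n" unfolding x_def using pm_Pts[OF q y] .
      have "map (\<lambda>i. x!(p i)) [0..<n] = y"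
        using y p qp by (auto simp: x_def Pts_def intro!: nth_equalityI)
      hence "pm n p x = Some y" using xP by (simp add: pm_def)
      thus "y \<in> ran (pm n p)" by (auto simp: ran_def)
    qed
  qed
  have bij: "bij_betw p {..<n} {..<n}"
    by (rule bij_betw_byWitness[where f'=q]) (use p q pq qp in auto)
  have inj: "inj_on (pm n p) (dom (pm n p))"
  proof (rule inj_onI)
    fix x y assume x: "x \<in> dom (pm n p)" and y: "y \<in> dom (pm n p)" and eq: "pm n p x = pm n p y"
    have xP: "x \<in> Pts n" and yP: "y \<in> Pts n" using x y dom by auto
    have m: "\<forall>i\<in>set [0..<n]. x!(p i) = y!(p i)"
      using eq xP yP unfolding pm_def by (simp add: map_eq_conv)
    show "x = y"
    proof (rule nth_equalityI)
      show "length x = length y" using xP yP by (simp add: Pts_def)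
      fix k assume "k < length x"
      hence k: "k < n" using xP by (simp add: Pts_def)
      have "x!(p (q k)) = y!(p (q k))" using m q k by auto
      thus "x!k = y!k" using pq k by simp
    qed
  qed
  have iso: "edist n (the (pm n p x)) (the (pm n p y)) = edist n x y"
    if x: "x \<in> dom (pm n p)" and y: "y \<in> dom (pm n p)" for x y
  proof -
    have xP: "x \<in> Pts n" and yP: "y \<in> Pts n" using x y dom by auto
    have "(\<Sum>i<n. (real (map (\<lambda>i. x!(p i)) [0..<n] ! i) - real (map (\<lambda>i. y!(p i)) [0..<n] ! i))\<^sup>2)
        = (\<Sum>i<n. (\<lambda>k. (real (x!k) - real (y!k))\<^sup>2) (p i))"
      by (rule sum.cong) auto
    also have "\<dots> = (\<Sum>k<n. (real (x!k) - real (y!k))\<^sup>2)"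
      by (rule sum.reindex_bij_betw[OF bij])
    finally show ?thesis using xP yP by (simp add: pm_def edist_def)
  qed
  show ?thesis unfolding IN_inf_def using dom ran inj iso by auto
qed

lemma pm_comp:
  assumes p: "\<forall>k<n. p k < n" and q: "\<forall>k<n. q k < n" and pq: "\<forall>k<n. p (q k) = k"
  shows "pmult (pm n p) (pm n q) = pid n"
proof
  fix x
  show "pmult (pm n p) (pm n q) x = pid n x"
  proof (cases "x \<in> Pts n")
    case True
    have "map (\<lambda>k. map (\<lambda>i. x ! p i) [0..<n] ! q k) [0..<n] = x"
    proof (rule nth_equalityI)
      show "length (map (\<lambda>k. map (\<lambda>i. x ! p i) [0..<n] ! q k) [0..<n]) = length x"
        using True by (simp add: Pts_def)
    next
      fix k assume "k < length (map (\<lambda>k. map (\<lambda>i. x ! p i) [0..<n] ! q k) [0..<n])"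
      hence k: "k < n" by simp
      show "map (\<lambda>k. map (\<lambda>i. x ! p i) [0..<n] ! q k) [0..<n] ! k = x ! k"
        using k pq q by simp
    qed
    thus ?thesis using True pm_Pts[OF p True] by (simp add: pmult_def pm_def pid_def map_comp_def)
  next
    case False
    thus ?thesis by (simp add: pmult_def pm_def pid_def map_comp_def)
  qed
qed

lemma partial_id_idem:
  assumes "\<forall>x. \<beta> x = None \<or> \<beta> x = Some x"
  shows "idem_IN \<beta>"
  unfolding idem_IN_def pmult_def
proof
  fix x show "(\<beta> \<circ>\<^sub>m \<beta>) x = \<beta> x"
    using assms[rule_format, of x] by (auto simp: map_comp_def)
qed


lemma unit_dom:
  assumes "\<sigma> \<in> units_IN n" shows "dom \<sigma> = Pts n" "\<sigma> \<in> IN_inf n"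
proof -
  show s: "\<sigma> \<in> IN_inf n" using assms by (simp add: units_IN_def)
  obtain \<tau> where eq: "pmult \<sigma> \<tau> = pid n" using assms by (auto simp: units_IN_def)
  have "x \<in> dom \<sigma>" if x: "x \<in> Pts n" for x
  proof -
    have "(\<tau> \<circ>\<^sub>m \<sigma>) x = Some x" using fun_cong[OF eq, of x] x by (simp add: pmult_def pid_def)
    thus ?thesis by (auto simp: map_comp_def split: option.splits)
  qed
  moreover have "dom \<sigma> \<subseteq> Pts n" using s by (simp add: IN_inf_def)
  ultimately show "dom \<sigma> = Pts n" by blast
qed

lemma x0_lemma:
  assumes "\<forall>j<n. f j < n" "\<forall>j<n. map (\<lambda>i. M+i+1) [0..<n] ! (f j) = map (\<lambda>i. M+i+1) [0..<n] ! j"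
  shows "\<forall>j<n. f j = j"
  using assms by auto

theorem lemma3p4:
  fixes n :: nat and \<alpha> :: "nat list \<rightharpoonup> nat list"
  assumes "n \<ge> 2" and "\<alpha> \<in> IN_inf n"
  shows "(\<exists>!\<sigma>l. \<sigma>l \<in> units_IN n \<and> idem_IN (pmult \<sigma>l \<alpha>))
       \<and> (\<exists>!\<sigma>r. \<sigma>r \<in> units_IN n \<and> idem_IN (pmult \<alpha> \<sigma>r))"
proof -
  obtain \<pi> where bij: "bij_betw \<pi> {..<n} {..<n}"
    and st: "\<forall>x\<in>dom \<alpha>. length (the (\<alpha> x)) = n \<and> (\<forall>i<n. the (\<alpha> x) ! (\<pi> i) = x ! i)"
    using perm_structure[OF assms] by blast
  define \<rho> where "\<rho> = inv_into {..<n} \<pi>"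
  have pin: "\<forall>k<n. \<pi> k < n" using bij by (auto simp: bij_betw_def)
  have rin: "\<forall>k<n. \<rho> k < n"
  proof (intro allI impI)
    fix k assume "k < n"
    hence "k \<in> \<pi> ` {..<n}" using bij by (simp add: bij_betw_def)
    thus "\<rho> k < n" unfolding \<rho>_def using inv_into_into[of k \<pi> "{..<n}"] by simp
  qed
  have pr: "\<forall>k<n. \<pi> (\<rho> k) = k" using bij by (auto simp: \<rho>_def bij_betw_def f_inv_into_f)
  have rp: "\<forall>k<n. \<rho> (\<pi> k) = k" using bij by (auto simp: \<rho>_def bij_betw_def inv_into_f_f)
  define \<sigma> where "\<sigma> = pm n \<pi>"
  have domP: "dom \<alpha> \<subseteq> Pts n" and ranP: "ran \<alpha> \<subseteq> Pts n" and inj\<alpha>: "inj_on \<alpha> (dom \<alpha>)"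
    and fd: "finite (Pts n - dom \<alpha>)" using assms(2) unfolding IN_inf_def by auto
  have \<sigma>U: "\<sigma> \<in> units_IN n"
    unfolding units_IN_def \<sigma>_def using pm_in[OF pin rin pr rp] pm_in[OF rin pin rp pr]
      pm_comp[OF pin rin pr] pm_comp[OF rin pin rp] by blast
  have Aeq: "the (\<alpha> y) = x" if yx: "y = map (\<lambda>i. x!(\<pi> i)) [0..<n]" and yD: "y \<in> dom \<alpha>" and xP: "x \<in> Pts n" for x y
  proof (rule nth_equalityI)
    show "length (the (\<alpha> y)) = length x" using st yD xP by (auto simp: Pts_def)
    fix k assume "k < length (the (\<alpha> y))"
    hence k: "k < n" using st yD by auto
    have "the (\<alpha> y) ! (\<pi> (\<rho> k)) = y ! (\<rho> k)" using st yD rin k by auto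
    also have "\<dots> = x ! (\<pi> (\<rho> k))" using yx rin k by simp
    finally show "the (\<alpha> y) ! k = x ! k" using pr k by simp
  qed
  have left_ex: "idem_IN (pmult \<sigma> \<alpha>)"
  proof (rule partial_id_idem, rule allI)
    fix x show "pmult \<sigma> \<alpha> x = None \<or> pmult \<sigma> \<alpha> x = Some x"
    proof (cases "x \<in> Pts n \<and> map (\<lambda>i. x!(\<pi> i)) [0..<n] \<in> dom \<alpha>")
      case True
      then obtain w where w: "\<alpha> (map (\<lambda>i. x!(\<pi> i)) [0..<n]) = Some w" by auto
      have "w = x" using Aeq[OF refl True[THEN conjunct2] True[THEN conjunct1]] w by simp
      thus ?thesis using True w by (simp add: pmult_def \<sigma>_def pm_def map_comp_def)
    next
      case False thus ?thesis by (auto simp: pmult_def \<sigma>_def pm_def map_comp_def domIff split: option.splits)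
    qed
  qed
  have right_ex: "idem_IN (pmult \<alpha> \<sigma>)"
  proof (rule partial_id_idem, rule allI)
    fix x show "pmult \<alpha> \<sigma> x = None \<or> pmult \<alpha> \<sigma> x = Some x"
    proof (cases "\<alpha> x")
      case None thus ?thesis by (simp add: pmult_def map_comp_def)
    next
      case (Some y)
      have xD: "x \<in> dom \<alpha>" using Some by auto
      have yP: "y \<in> Pts n" using Some ranP by (auto simp: ran_def)
      have xP: "x \<in> Pts n" using xD domP by auto
      have yy: "\<forall>i<n. y!(\<pi> i) = x!i" using st xD Some by force
      have "map (\<lambda>i. y!(\<pi> i)) [0..<n] = x"
        using yy xP by (auto simp: Pts_def intro!: nth_equalityI)
      thus ?thesis using Some yP by (simp add: pmult_def \<sigma>_def pm_def map_comp_def)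
    qed
  qed
  obtain M where M: "\<forall>x\<in>Pts n. (\<exists>i<n. M < x!i) \<longrightarrow> x \<in> dom \<alpha>" using big_set[OF fd] by blast
  define x0 where "x0 = map (\<lambda>i. M+i+1) [0..<n]"
  have n0: "0 < n" using assms(1) by simp
  have x0P: "x0 \<in> Pts n" by (simp add: x0_def Pts_def)
  have x0D: "x0 \<in> dom \<alpha>" using M x0P n0 by (auto simp: x0_def)
  have left_uni: "\<sigma>' = \<sigma>" if U: "\<sigma>' \<in> units_IN n" and I: "idem_IN (pmult \<sigma>' \<alpha>)" for \<sigma>'
  proof -
    have d\<sigma>: "dom \<sigma>' = Pts n" and \<sigma>'IN: "\<sigma>' \<in> IN_inf n" using unit_dom[OF U] by auto
    have ran\<sigma>: "ran \<sigma>' \<subseteq> Pts n" and inj\<sigma>: "inj_on \<sigma>' (dom \<sigma>')" using \<sigma>'IN unfolding IN_inf_def by auto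
    obtain \<pi>' where bij': "bij_betw \<pi>' {..<n} {..<n}"
      and st': "\<forall>x\<in>dom \<sigma>'. length (the (\<sigma>' x)) = n \<and> (\<forall>i<n. the (\<sigma>' x) ! (\<pi>' i) = x ! i)"
      using perm_structure[OF assms(1) \<sigma>'IN] by blast
    have bk: "\<alpha> y = Some x" if xy: "\<sigma>' x = Some y" and yD: "y \<in> dom \<alpha>" for x y
    proof -
      obtain w where w: "\<alpha> y = Some w" using yD by auto
      have bx: "(\<alpha> \<circ>\<^sub>m \<sigma>') x = Some w" using xy w by simp
      have "((\<alpha> \<circ>\<^sub>m \<sigma>') \<circ>\<^sub>m (\<alpha> \<circ>\<^sub>m \<sigma>')) x = (\<alpha> \<circ>\<^sub>m \<sigma>') x"
        using I unfolding idem_IN_def pmult_def by simp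
      hence bw: "(\<alpha> \<circ>\<^sub>m \<sigma>') w = Some w" using bx by simp
      then obtain y' where y': "\<sigma>' w = Some y'" "\<alpha> y' = Some w"
        by (auto simp: map_comp_def split: option.splits)
      have "y = y'" using inj\<alpha> w y' by (metis domI inj_onD)
      hence "x = w" using inj\<sigma> xy y' by (metis domI inj_onD)
      thus ?thesis using w by simp
    qed
    obtain y0 where y0: "\<sigma>' x0 = Some y0" using d\<sigma> x0P by auto
    have y0P: "y0 \<in> Pts n" using y0 ran\<sigma> by (auto simp: ran_def)
    have "y0 ! (\<pi>' 0) = x0 ! 0" using st' y0 d\<sigma> x0P n0 by force
    moreover have "\<pi>' 0 < n" using bij' n0 by (auto simp: bij_betw_def)
    moreover have "x0 ! 0 = M + 1" using n0 by (simp add: x0_def)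
    ultimately have "M < y0 ! (\<pi>' 0)" by simp
    hence y0D: "y0 \<in> dom \<alpha>" using M y0P \<open>\<pi>' 0 < n\<close> by blast
    have ay0: "the (\<alpha> y0) = x0" using bk[OF y0 y0D] by simp
    have "\<forall>j<n. \<pi> (\<pi>' j) < n \<and> x0 ! \<pi> (\<pi>' j) = x0 ! j"
    proof (intro allI impI conjI)
      show "\<And>j. j<n \<Longrightarrow> \<pi> (\<pi>' j) < n" using bij bij' by (auto simp: bij_betw_def)
      show "\<And>j. j<n \<Longrightarrow> x0 ! \<pi> (\<pi>' j) = x0 ! j"
      proof -
        fix j assume j: "j<n"
        have p'j: "\<pi>' j < n" using bij' j by (auto simp: bij_betw_def)
        have "x0 ! \<pi> (\<pi>' j) = y0 ! (\<pi>' j)" using st y0D p'j ay0 by auto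
        also have "\<dots> = x0 ! j" using st' y0 d\<sigma> x0P j by force
        finally show "x0 ! \<pi> (\<pi>' j) = x0 ! j" .
      qed
    qed
    hence pp': "\<forall>j<n. \<pi> (\<pi>' j) = j" using x0_lemma[of n "\<lambda>j. \<pi> (\<pi>' j)" M] unfolding x0_def by blast
    show ?thesis
    proof
      fix x show "\<sigma>' x = \<sigma> x"
      proof (cases "x \<in> Pts n")
        case True
        obtain y where y: "\<sigma>' x = Some y" using d\<sigma> True by auto
        have "y = map (\<lambda>i. x!(\<pi> i)) [0..<n]"
        proof (rule nth_equalityI)
          show "length y = length (map (\<lambda>i. x!(\<pi> i)) [0..<n])" using st' y d\<sigma> True by force
          fix i assume "i < length y"
          hence i: "i < n" using st' y d\<sigma> True by force
          hence "i \<in> \<pi>' ` {..<n}" using bij' by (simp add: bij_betw_def)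
          then obtain j where j: "j < n" "\<pi>' j = i" by auto
          have "y ! i = x ! j" using st' y d\<sigma> True j by force
          also have "\<dots> = x ! (\<pi> i)" using pp' j by (metis)
          finally show "y ! i = map (\<lambda>i. x!(\<pi> i)) [0..<n] ! i" using i by simp
        qed
        thus ?thesis using y True by (simp add: \<sigma>_def pm_def)
      next
        case False
        hence "\<sigma>' x = None" using d\<sigma> by auto
        thus ?thesis using False by (simp add: \<sigma>_def pm_def)
      qed
    qed
  qed
  have right_uni: "\<sigma>' = \<sigma>" if U: "\<sigma>' \<in> units_IN n" and I: "idem_IN (pmult \<alpha> \<sigma>')" for \<sigma>'
  proof -
    have d\<sigma>: "dom \<sigma>' = Pts n" and \<sigma>'IN: "\<sigma>' \<in> IN_inf n" using unit_dom[OF U] by auto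
    have ran\<sigma>: "ran \<sigma>' \<subseteq> Pts n" and inj\<sigma>: "inj_on \<sigma>' (dom \<sigma>')" using \<sigma>'IN unfolding IN_inf_def by auto
    obtain \<pi>' where bij': "bij_betw \<pi>' {..<n} {..<n}"
      and st': "\<forall>x\<in>dom \<sigma>'. length (the (\<sigma>' x)) = n \<and> (\<forall>i<n. the (\<sigma>' x) ! (\<pi>' i) = x ! i)"
      using perm_structure[OF assms(1) \<sigma>'IN] by blast
    have bk: "\<sigma>' y = Some x" if xy: "\<alpha> x = Some y" for x y
    proof -
      have yP: "y \<in> Pts n" using xy ranP by (auto simp: ran_def)
      obtain w where w: "\<sigma>' y = Some w" using yP d\<sigma> by auto
      have bx: "(\<sigma>' \<circ>\<^sub>m \<alpha>) x = Some w" using xy w by simp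
      have "((\<sigma>' \<circ>\<^sub>m \<alpha>) \<circ>\<^sub>m (\<sigma>' \<circ>\<^sub>m \<alpha>)) x = (\<sigma>' \<circ>\<^sub>m \<alpha>) x"
        using I unfolding idem_IN_def pmult_def by simp
      hence bw: "(\<sigma>' \<circ>\<^sub>m \<alpha>) w = Some w" using bx by simp
      then obtain y' where y': "\<alpha> w = Some y'" "\<sigma>' y' = Some w"
        by (auto simp: map_comp_def split: option.splits)
      have "y = y'" using inj\<sigma> w y' by (metis domI inj_onD)
      hence "x = w" using inj\<alpha> xy y' by (metis domI inj_onD)
      thus ?thesis using w by simp
    qed
    obtain y0 where y0: "\<alpha> x0 = Some y0" using x0D by auto
    have y0P: "y0 \<in> Pts n" using y0 ranP by (auto simp: ran_def)
    have sy0: "\<sigma>' y0 = Some x0" using bk[OF y0] .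
    have "\<forall>j<n. \<pi>' (\<pi> j) < n \<and> x0 ! \<pi>' (\<pi> j) = x0 ! j"
    proof (intro allI impI conjI)
      show "\<And>j. j<n \<Longrightarrow> \<pi>' (\<pi> j) < n" using bij bij' by (auto simp: bij_betw_def)
      show "\<And>j. j<n \<Longrightarrow> x0 ! \<pi>' (\<pi> j) = x0 ! j"
      proof -
        fix j assume j: "j<n"
        have pj: "\<pi> j < n" using pin j by auto
        have "x0 ! \<pi>' (\<pi> j) = y0 ! (\<pi> j)" using st' sy0 d\<sigma> y0P pj by force
        also have "\<dots> = x0 ! j" using st y0 x0D j by force
        finally show "x0 ! \<pi>' (\<pi> j) = x0 ! j" .
      qed
    qed
    hence p'p: "\<forall>j<n. \<pi>' (\<pi> j) = j" using x0_lemma[of n "\<lambda>j. \<pi>' (\<pi> j)" M] unfolding x0_def by blast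
    show ?thesis
    proof
      fix x show "\<sigma>' x = \<sigma> x"
      proof (cases "x \<in> Pts n")
        case True
        obtain y where y: "\<sigma>' x = Some y" using d\<sigma> True by auto
        have "y = map (\<lambda>i. x!(\<pi> i)) [0..<n]"
        proof (rule nth_equalityI)
          show "length y = length (map (\<lambda>i. x!(\<pi> i)) [0..<n])" using st' y d\<sigma> True by force
          fix i assume "i < length y"
          hence i: "i < n" using st' y d\<sigma> True by force
          have "y ! i = y ! (\<pi>' (\<pi> i))" using p'p i by simp
          also have "\<dots> = x ! (\<pi> i)" using st' y d\<sigma> True pin i by force
          finally show "y ! i = map (\<lambda>i. x!(\<pi> i)) [0..<n] ! i" using i by simp
        qed
        thus ?thesis using y True by (simp add: \<sigma>_def pm_def)
      next
        case False
        hence "\<sigma>' x = None" using d\<sigma> by auto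
        thus ?thesis using False by (simp add: \<sigma>_def pm_def)
      qed
    qed
  qed
  show ?thesis
  proof
    show "\<exists>!\<sigma>l. \<sigma>l \<in> units_IN n \<and> idem_IN (pmult \<sigma>l \<alpha>)"
      using \<sigma>U left_ex left_uni by blast
    show "\<exists>!\<sigma>r. \<sigma>r \<in> units_IN n \<and> idem_IN (pmult \<alpha> \<sigma>r)"
      using \<sigma>U right_ex right_uni by blast
  qed
qed

end
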